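(* For all integers $n$ and $\alpha$ with $n\le\alpha\le 2^n$, there exists a minimal $n$-state nondeterministic finite automaton accepting a star-free language whose equivalent minimal deterministic finite automaton has exactly $\alpha$ states.
   Context: Nondeterministic finite automata (NFAs) have a single initial state and a transition function $\delta:Q\times\Sigma\to 2^Q$ that may map to the empty set; a non-accepting sink state is not needed and not counted for NFAs. Deterministic finite automata (DFAs) are complete (every state has exactly one successor on every letter), so a sink state is counted. A minimal $n$-state NFA is an NFA with $n$ states such that no NFA with fewer states accepts the same language. A language $L\subseteq\Sigma^*$ is star-free if it can be obtained from the languages $\{a\}$, $a\in\Sigma$, by finitely many applications of union, complementation (with respect to $\Sigma^*$), and concatenation. *)

theory Defs
  imports Main
begin

definition conc :: "'a list set \<Rightarrow> 'a list set \<Rightarrow> 'a list set" where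
  "conc A B = {u @ v | u v. u \<in> A \<and> v \<in> B}"

inductive star_free :: "'a set \<Rightarrow> 'a list set \<Rightarrow> bool" for Al :: "'a set" where
  sf_letter: "a \<in> Al \<Longrightarrow> star_free Al {[a]}"
| sf_union: "star_free Al A \<Longrightarrow> star_free Al B \<Longrightarrow> star_free Al (A \<union> B)"
| sf_compl: "star_free Al A \<Longrightarrow> star_free Al (lists Al - A)"
| sf_conc: "star_free Al A \<Longrightarrow> star_free Al B \<Longrightarrow> star_free Al (conc A B)"

record ('s, 'a) nfa =
  nstates :: "'s set"
  ninit :: 's
  ndelta :: "'s \<Rightarrow> 'a \<Rightarrow> 's set"
  nfinal :: "'s set"

definition nfa_wf :: "'a set \<Rightarrow> ('s, 'a) nfa \<Rightarrow> bool" where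
  "nfa_wf Al N \<longleftrightarrow> finite (nstates N) \<and> ninit N \<in> nstates N \<and> nfinal N \<subseteq> nstates N
     \<and> (\<forall>q \<in> nstates N. \<forall>a \<in> Al. ndelta N q a \<subseteq> nstates N)"

fun nfa_steps :: "('s, 'a) nfa \<Rightarrow> 's set \<Rightarrow> 'a list \<Rightarrow> 's set" where
  "nfa_steps N S [] = S"
| "nfa_steps N S (a # w) = nfa_steps N (\<Union>q \<in> S. ndelta N q a) w"

definition nfa_lang :: "'a set \<Rightarrow> ('s, 'a) nfa \<Rightarrow> 'a list set" where
  "nfa_lang Al N = {w \<in> lists Al. nfa_steps N {ninit N} w \<inter> nfinal N \<noteq> {}}"

definition nfa_minimal :: "'a set \<Rightarrow> (nat, 'a) nfa \<Rightarrow> bool" where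
  "nfa_minimal Al N \<longleftrightarrow> nfa_wf Al N \<and>
     (\<forall>N' :: (nat, 'a) nfa. nfa_wf Al N' \<and> nfa_lang Al N' = nfa_lang Al N
        \<longrightarrow> card (nstates N) \<le> card (nstates N'))"

record ('s, 'a) dfa =
  dstates :: "'s set"
  dinit :: 's
  ddelta :: "'s \<Rightarrow> 'a \<Rightarrow> 's"
  dfinal :: "'s set"

definition dfa_wf :: "'a set \<Rightarrow> ('s, 'a) dfa \<Rightarrow> bool" where
  "dfa_wf Al D \<longleftrightarrow> finite (dstates D) \<and> dinit D \<in> dstates D \<and> dfinal D \<subseteq> dstates D
     \<and> (\<forall>q \<in> dstates D. \<forall>a \<in> Al. ddelta D q a \<in> dstates D)"

definition dfa_lang :: "'a set \<Rightarrow> ('s, 'a) dfa \<Rightarrow> 'a list set" where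
  "dfa_lang Al D = {w \<in> lists Al. foldl (ddelta D) (dinit D) w \<in> dfinal D}"

definition dfa_minimal :: "'a set \<Rightarrow> (nat, 'a) dfa \<Rightarrow> bool" where
  "dfa_minimal Al D \<longleftrightarrow> dfa_wf Al D \<and>
     (\<forall>D' :: (nat, 'a) dfa. dfa_wf Al D' \<and> dfa_lang Al D' = dfa_lang Al D
        \<longrightarrow> card (dstates D) \<le> card (dstates D'))"

end

theory Submission imports Defs "HOL-Library.Nat_Bijection" begin

lemma steps_append: "nfa_steps N S (u @ v) = nfa_steps N (nfa_steps N S u) v"
  by (induction u arbitrary: S) auto

lemma steps_union: "nfa_steps N S w = (\<Union>q\<in>S. nfa_steps N {q} w)"
proof (induction w arbitrary: S)
  case Nil then show ?case by auto
next
  case (Cons a w)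
  have "nfa_steps N S (a # w) = nfa_steps N (\<Union>q\<in>S. ndelta N q a) w" by simp
  also have "\<dots> = (\<Union>p\<in>(\<Union>q\<in>S. ndelta N q a). nfa_steps N {p} w)"
    by (rule Cons.IH)
  also have "\<dots> = (\<Union>q\<in>S. \<Union>p\<in>ndelta N q a. nfa_steps N {p} w)" by (rule UN_UN_flatten)
  also have "\<dots> = (\<Union>q\<in>S. nfa_steps N {q} (a # w))"
  proof (rule SUP_cong[OF refl])
    fix q
    have "nfa_steps N {q} (a # w) = nfa_steps N (ndelta N q a) w" by simp
    also have "\<dots> = (\<Union>p\<in>ndelta N q a. nfa_steps N {p} w)" by (rule Cons.IH)
    finally show "(\<Union>p\<in>ndelta N q a. nfa_steps N {p} w) = nfa_steps N {q} (a # w)" by simp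
  qed
  finally show ?case .
qed

lemma steps_empty[simp]: "nfa_steps N {} w = {}"
  by (induction w) auto

lemma steps_subset:
  "nfa_wf Al N \<Longrightarrow> S \<subseteq> nstates N \<Longrightarrow> w \<in> lists Al \<Longrightarrow> nfa_steps N S w \<subseteq> nstates N"
proof (induction w arbitrary: S)
  case Nil then show ?case by simp
next
  case (Cons a w)
  have wfd: "\<forall>q\<in>nstates N. \<forall>a\<in>Al. ndelta N q a \<subseteq> nstates N" using Cons.prems(1) unfolding nfa_wf_def by simp
  have aA: "a \<in> Al" using Cons.prems(3) by simp
  have "ndelta N q a \<subseteq> nstates N" if "q \<in> S" for q using wfd aA that Cons.prems(2) by blast
  then have "(\<Union>q\<in>S. ndelta N q a) \<subseteq> nstates N" by (rule UN_least)
  then show ?case using Cons by simp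
qed

lemma acc_append: "(nfa_steps N S (u @ v) \<inter> F \<noteq> {}) \<longleftrightarrow> (\<exists>q \<in> nfa_steps N S u. nfa_steps N {q} v \<inter> F \<noteq> {})"
proof -
  have "nfa_steps N S (u @ v) = (\<Union>q\<in>nfa_steps N S u. nfa_steps N {q} v)"
    unfolding steps_append by (rule steps_union)
  then show ?thesis by auto
qed

lemma fooling:
  fixes N' :: "('s, 'a) nfa"
  assumes wf: "nfa_wf Al N'"
  and xy: "\<And>i. i < n \<Longrightarrow> x i \<in> lists Al \<and> y i \<in> lists Al \<and> x i @ y i \<in> nfa_lang Al N'"
  and fool: "\<And>i j. i<n \<Longrightarrow> j<n \<Longrightarrow> i\<noteq>j \<Longrightarrow> x i @ y j \<notin> nfa_lang Al N' \<or> x j @ y i \<notin> nfa_lang Al N'"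
  shows "n \<le> card (nstates N')"
proof -
  let ?P = "\<lambda>i q. q \<in> nfa_steps N' {ninit N'} (x i) \<and> nfa_steps N' {q} (y i) \<inter> nfinal N' \<noteq> {}"
  have ex: "\<exists>q. ?P i q" if "i < n" for i
  proof -
    from xy[OF that] have "nfa_steps N' {ninit N'} (x i @ y i) \<inter> nfinal N' \<noteq> {}"
      unfolding nfa_lang_def by simp
    then show ?thesis unfolding acc_append by auto
  qed
  define f where "f i = (SOME q. ?P i q)" for i
  have Pf: "?P i (f i)" if "i < n" for i unfolding f_def using someI_ex[OF ex[OF that]] .
  have "f ` {..<n} \<subseteq> nstates N'"
  proof
    fix q assume "q \<in> f ` {..<n}"
    then obtain i where i: "i < n" "q = f i" by auto
    have "{ninit N'} \<subseteq> nstates N'" using wf unfolding nfa_wf_def by simp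
    then have "nfa_steps N' {ninit N'} (x i) \<subseteq> nstates N'"
      using steps_subset[OF wf] xy[OF i(1)] by simp
    then show "q \<in> nstates N'" using Pf[OF i(1)] i by auto
  qed
  moreover have "inj_on f {..<n}"
  proof (rule inj_onI, rule ccontr)
    fix i j assume ij: "i \<in> {..<n}" "j \<in> {..<n}" "f i = f j" "i \<noteq> j"
    have mem: "x i @ y j \<in> nfa_lang Al N'" if "i < n" "j < n" "f i = f j" for i j
    proof -
      have "nfa_steps N' {f i} (y j) \<inter> nfinal N' \<noteq> {}" using Pf[OF that(2)] that(3) by simp
      then have "nfa_steps N' {ninit N'} (x i @ y j) \<inter> nfinal N' \<noteq> {}"
        unfolding acc_append using Pf[OF that(1)] by auto
      then show ?thesis using xy[OF that(1)] xy[OF that(2)] unfolding nfa_lang_def by simp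
    qed
    show False using mem[of i j] mem[of j i] ij fool[of i j] by auto
  qed
  moreover have "finite (nstates N')" using wf unfolding nfa_wf_def by simp
  ultimately have "card {..<n} \<le> card (nstates N')" using card_inj_on_le by blast
  then show ?thesis by simp
qed

lemma foldl_in:
  "dfa_wf Al D \<Longrightarrow> q \<in> dstates D \<Longrightarrow> w \<in> lists Al \<Longrightarrow> foldl (ddelta D) q w \<in> dstates D"
  by (induction w arbitrary: q) (auto simp: dfa_wf_def)

lemma dfa_lower:
  fixes D' :: "('s, 'a) dfa"
  assumes wf: "dfa_wf Al D'" and g: "\<And>T. T \<in> R \<Longrightarrow> g T \<in> lists Al"
  and dist: "\<And>T1 T2. T1 \<in> R \<Longrightarrow> T2 \<in> R \<Longrightarrow> T1 \<noteq> T2 \<Longrightarrow>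
      \<exists>z\<in>lists Al. (g T1 @ z \<in> dfa_lang Al D') \<noteq> (g T2 @ z \<in> dfa_lang Al D')"
  shows "card R \<le> card (dstates D')"
proof -
  define f where "f T = foldl (ddelta D') (dinit D') (g T)" for T
  have "f ` R \<subseteq> dstates D'" using foldl_in[OF wf] wf g unfolding f_def dfa_wf_def by auto
  moreover have "inj_on f R"
  proof (rule inj_onI, rule ccontr)
    fix T1 T2 assume h: "T1 \<in> R" "T2 \<in> R" "f T1 = f T2" "T1 \<noteq> T2"
    obtain z where z: "z \<in> lists Al" "(g T1 @ z \<in> dfa_lang Al D') \<noteq> (g T2 @ z \<in> dfa_lang Al D')"
      using dist[OF h(1,2,4)] by blast
    show False using z h(3) g[OF h(1)] g[OF h(2)] unfolding dfa_lang_def f_def by auto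
  qed
  moreover have "finite (dstates D')" using wf unfolding dfa_wf_def by simp
  ultimately show ?thesis using card_inj_on_le by blast
qed

definition subdfa :: "(nat, nat) nfa \<Rightarrow> nat set set \<Rightarrow> (nat, nat) dfa" where
  "subdfa N R = \<lparr>dstates = set_encode ` R, dinit = set_encode {ninit N},
     ddelta = (\<lambda>q a. set_encode (\<Union>p\<in>set_decode q. ndelta N p a)),
     dfinal = set_encode ` {T\<in>R. T \<inter> nfinal N \<noteq> {}}\<rparr>"

lemma framework:
  fixes N :: "(nat,nat) nfa" and Al :: "nat set" and R :: "nat set set" and x y :: "nat \<Rightarrow> nat list"
  assumes fin: "finite Al" "Al \<noteq> {}"
  and wf: "nfa_wf Al N" and cardN: "card (nstates N) = n"
  and xy: "\<And>i. i < n \<Longrightarrow> x i \<in> lists Al \<and> y i \<in> lists Al \<and> x i @ y i \<in> nfa_lang Al N"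
  and fool: "\<And>i j. i<n \<Longrightarrow> j<n \<Longrightarrow> i\<noteq>j \<Longrightarrow> x i @ y j \<notin> nfa_lang Al N \<or> x j @ y i \<notin> nfa_lang Al N"
  and RS: "R \<subseteq> Pow (nstates N)" and R0: "{ninit N} \<in> R"
  and Rcl: "\<And>T a. T \<in> R \<Longrightarrow> a \<in> Al \<Longrightarrow> (\<Union>q\<in>T. ndelta N q a) \<in> R"
  and Rreach: "\<And>T. T \<in> R \<Longrightarrow> \<exists>w\<in>lists Al. nfa_steps N {ninit N} w = T"
  and Rdist: "\<And>T1 T2. T1 \<in> R \<Longrightarrow> T2 \<in> R \<Longrightarrow> T1 \<noteq> T2 \<Longrightarrow>
      \<exists>z\<in>lists Al. (nfa_steps N T1 z \<inter> nfinal N \<noteq> {}) \<noteq> (nfa_steps N T2 z \<inter> nfinal N \<noteq> {})"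
  and sf: "star_free Al (nfa_lang Al N)"
  and cardR: "card R = \<alpha>"
  shows "\<exists>(Al :: nat set) (N :: (nat, nat) nfa) (D :: (nat, nat) dfa).
           finite Al \<and> Al \<noteq> {} \<and>
           nfa_minimal Al N \<and> card (nstates N) = n \<and>
           star_free Al (nfa_lang Al N) \<and>
           dfa_minimal Al D \<and> dfa_lang Al D = nfa_lang Al N \<and>
           card (dstates D) = \<alpha>"
proof -
  define D where "D = subdfa N R"
  have finS: "finite (nstates N)" using wf unfolding nfa_wf_def by simp
  have finT: "finite T" if "T \<in> R" for T using RS that finS by (auto intro: finite_subset)
  have finR: "finite R" using RS finS by (meson finite_Pow_iff finite_subset)
  have nmin: "nfa_minimal Al N"
    unfolding nfa_minimal_def
  proof (intro conjI allI impI)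
    show "nfa_wf Al N" by (rule wf)
    fix N' :: "(nat,nat) nfa" assume h: "nfa_wf Al N' \<and> nfa_lang Al N' = nfa_lang Al N"
    show "card (nstates N) \<le> card (nstates N')"
      unfolding cardN using fooling[of Al N' n x y] h xy fool by auto
  qed
  have dfawf: "dfa_wf Al D"
    unfolding dfa_wf_def D_def subdfa_def using finR imageI[OF R0, of set_encode] Rcl finT by auto
  have run: "foldl (ddelta D) (set_encode T) w = set_encode (nfa_steps N T w) \<and> nfa_steps N T w \<in> R"
    if "T \<in> R" "w \<in> lists Al" for T w
    using that
  proof (induction w arbitrary: T)
    case Nil then show ?case by simp
  next
    case (Cons a w)
    have "ddelta D (set_encode T) a = set_encode (\<Union>q\<in>T. ndelta N q a)"
      unfolding D_def subdfa_def using finT[OF Cons.prems(1)] by simp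
    then show ?case using Cons.IH[of "\<Union>q\<in>T. ndelta N q a"] Rcl[OF Cons.prems(1)] Cons.prems by auto
  qed
  have langeq: "dfa_lang Al D = nfa_lang Al N"
  proof -
    have "foldl (ddelta D) (dinit D) w \<in> dfinal D \<longleftrightarrow> nfa_steps N {ninit N} w \<inter> nfinal N \<noteq> {}"
      if "w \<in> lists Al" for w
    proof -
      have r: "foldl (ddelta D) (dinit D) w = set_encode (nfa_steps N {ninit N} w)"
        "nfa_steps N {ninit N} w \<in> R"
        using run[OF R0 that] unfolding D_def subdfa_def by auto
      have "set_encode (nfa_steps N {ninit N} w) \<in> set_encode ` {T\<in>R. T \<inter> nfinal N \<noteq> {}}
          \<longleftrightarrow> nfa_steps N {ninit N} w \<inter> nfinal N \<noteq> {}"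
        using r(2) finT set_encode_eq by blast
      then show ?thesis using r unfolding D_def subdfa_def by simp
    qed
    then show ?thesis unfolding dfa_lang_def nfa_lang_def by blast
  qed
  have cardD: "card (dstates D) = \<alpha>"
  proof -
    have "inj_on set_encode R" using inj_on_set_encode finT
      by (metis inj_on_subset mem_Collect_eq subsetI)
    then show ?thesis unfolding D_def subdfa_def using cardR by (simp add: card_image)
  qed
  define g where "g T = (SOME w. w \<in> lists Al \<and> nfa_steps N {ninit N} w = T)" for T
  have gT: "g T \<in> lists Al \<and> nfa_steps N {ninit N} (g T) = T" if "T \<in> R" for T
    unfolding g_def using someI_ex[of "\<lambda>w. w \<in> lists Al \<and> nfa_steps N {ninit N} w = T"] Rreach[OF that]
    by blast
  have dmin: "dfa_minimal Al D"
    unfolding dfa_minimal_def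
  proof (intro conjI allI impI)
    show "dfa_wf Al D" by (rule dfawf)
    fix D' :: "(nat,nat) dfa" assume h: "dfa_wf Al D' \<and> dfa_lang Al D' = dfa_lang Al D"
    have "card R \<le> card (dstates D')"
    proof (rule dfa_lower[of Al D' R g])
      show "dfa_wf Al D'" using h by simp
      show "\<And>T. T \<in> R \<Longrightarrow> g T \<in> lists Al" using gT by blast
      fix T1 T2 assume t: "T1 \<in> R" "T2 \<in> R" "T1 \<noteq> T2"
      obtain z where z: "z \<in> lists Al"
        "(nfa_steps N T1 z \<inter> nfinal N \<noteq> {}) \<noteq> (nfa_steps N T2 z \<inter> nfinal N \<noteq> {})"
        using Rdist[OF t] by blast
      have "(g T1 @ z \<in> nfa_lang Al N) \<noteq> (g T2 @ z \<in> nfa_lang Al N)"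
        using z gT[OF t(1)] gT[OF t(2)] unfolding nfa_lang_def by (simp add: steps_append)
      then show "\<exists>z\<in>lists Al. (g T1 @ z \<in> dfa_lang Al D') \<noteq> (g T2 @ z \<in> dfa_lang Al D')"
        using z h langeq by auto
    qed
    then show "card (dstates D) \<le> card (dstates D')" using cardD cardR by simp
  qed
  show ?thesis using fin nmin cardN sf dmin langeq cardD by blast
qed


lemma sf_univ: "a \<in> Al \<Longrightarrow> star_free Al (lists Al)"
proof -
  assume a: "a \<in> Al"
  have "star_free Al ((lists Al - {[a]}) \<union> {[a]})"
    by (intro sf_union sf_compl sf_letter a)
  moreover have "(lists Al - {[a]}) \<union> {[a]} = lists Al" using a by auto
  ultimately show ?thesis by simp
qed

lemma sf_empty: "a \<in> Al \<Longrightarrow> star_free Al {}"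
  using sf_compl[OF sf_univ, of a Al] by simp

lemma sf_letters: "finite B \<Longrightarrow> B \<subseteq> Al \<Longrightarrow> a \<in> Al \<Longrightarrow> star_free Al ((\<lambda>a. [a]) ` B)"
proof (induction B rule: finite_induct)
  case empty then show ?case using sf_empty by simp
next
  case (insert b B)
  have "(\<lambda>a. [a]) ` insert b B = {[b]} \<union> (\<lambda>a. [a]) ` B" by auto
  moreover have "star_free Al ({[b]} \<union> (\<lambda>a. [a]) ` B)" using insert by (intro sf_union sf_letter) auto
  ultimately show ?case by simp
qed

lemma sf_eps: "finite Al \<Longrightarrow> a \<in> Al \<Longrightarrow> star_free Al {[]}"
proof -
  assume f: "finite Al" and a: "a \<in> Al"
  have eq: "{[]} = lists Al - conc ((\<lambda>a. [a]) ` Al) (lists Al)"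
  proof (rule set_eqI)
    fix w show "w \<in> {[]} \<longleftrightarrow> w \<in> lists Al - conc ((\<lambda>a. [a]) ` Al) (lists Al)"
    proof (cases w)
      case Nil then show ?thesis by (auto simp: conc_def)
    next
      case (Cons b v)
      have "b # v \<in> lists Al \<Longrightarrow> b # v \<in> conc ((\<lambda>a. [a]) ` Al) (lists Al)"
        unfolding conc_def by (rule CollectI, rule exI[of _ "[b]"], rule exI[of _ v]) simp
      then show ?thesis using Cons by auto
    qed
  qed
  have X: "star_free Al (lists Al - conc ((\<lambda>a. [a]) ` Al) (lists Al))"
    by (rule sf_compl[OF sf_conc[OF sf_letters[OF f subset_refl a] sf_univ[OF a]]])
  show ?thesis using X eq by simp
qed

lemma conc_single: "conc {u} {v} = {u @ v}"
  unfolding conc_def by blast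

lemma sf_word: "finite Al \<Longrightarrow> a \<in> Al \<Longrightarrow> w \<in> lists Al \<Longrightarrow> star_free Al {w}"
proof (induction w)
  case Nil then show ?case using sf_eps[of Al a] by simp
next
  case (Cons b w)
  have eq: "{b # w} = conc {[b]} {w}" by (simp add: conc_single)
  have b: "b \<in> Al" and w: "w \<in> lists Al" using Cons.prems by auto
  have X: "star_free Al (conc {[b]} {w})"
    by (rule sf_conc[OF sf_letter[OF b] Cons.IH[OF Cons.prems(1,2) w]])
  show ?case by (subst eq) (rule X)
qed

lemma sf_finite: "finite W \<Longrightarrow> finite Al \<Longrightarrow> a \<in> Al \<Longrightarrow> W \<subseteq> lists Al \<Longrightarrow> star_free Al W"
proof (induction W rule: finite_induct)
  case empty then show ?case using sf_empty[of a Al] by simp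
next
  case (insert w W)
  have X: "star_free Al ({w} \<union> W)" using insert sf_word[of Al a w] by (intro sf_union) auto
  then show ?case by simp
qed

lemma sf_lists: "finite Al \<Longrightarrow> a \<in> Al \<Longrightarrow> B \<subseteq> Al \<Longrightarrow> star_free Al (lists B)"
proof -
  assume f: "finite Al" and a: "a \<in> Al" and B: "B \<subseteq> Al"
  have eq: "lists B = lists Al - conc (conc (lists Al) ((\<lambda>a. [a]) ` (Al - B))) (lists Al)"
  proof (rule set_eqI)
    fix w
    show "w \<in> lists B \<longleftrightarrow> w \<in> lists Al - conc (conc (lists Al) ((\<lambda>a. [a]) ` (Al - B))) (lists Al)"
    proof
      assume wB: "w \<in> lists B"
      have "w \<notin> conc (conc (lists Al) ((\<lambda>a. [a]) ` (Al - B))) (lists Al)"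
      proof
        assume "w \<in> conc (conc (lists Al) ((\<lambda>a. [a]) ` (Al - B))) (lists Al)"
        then obtain u v c where "w = (u @ [c]) @ v" "c \<in> Al - B"
          unfolding conc_def by blast
        then show False using wB by auto
      qed
      then show "w \<in> lists Al - conc (conc (lists Al) ((\<lambda>a. [a]) ` (Al - B))) (lists Al)"
        using B wB by auto
    next
      assume h: "w \<in> lists Al - conc (conc (lists Al) ((\<lambda>a. [a]) ` (Al - B))) (lists Al)"
      show "w \<in> lists B"
      proof (rule ccontr)
        assume "w \<notin> lists B"
        then obtain b where b: "b \<in> set w" "b \<notin> B" by auto
        then obtain u v where uv: "w = u @ b # v" by (meson split_list)
        have wl: "w \<in> lists Al" using h by simp
        then have "u \<in> lists Al" "v \<in> lists Al" "b \<in> Al - B" using uv b by auto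
        then have "(u @ [b]) @ v \<in> conc (conc (lists Al) ((\<lambda>a. [a]) ` (Al - B))) (lists Al)"
          unfolding conc_def by blast
        then show False using h uv by simp
      qed
    qed
  qed
  have f2: "finite (Al - B)" using f by simp
  have X: "star_free Al (lists Al - conc (conc (lists Al) ((\<lambda>a. [a]) ` (Al - B))) (lists Al))"
    by (rule sf_compl[OF sf_conc[OF sf_conc[OF sf_univ[OF a] sf_letters[OF f2 Diff_subset a]] sf_univ[OF a]]])
  show ?thesis using X eq by simp
qed

definition N1 :: "nat \<Rightarrow> (nat,nat) nfa" where
  "N1 n = \<lparr>nstates = {0..<n}, ninit = 0, ndelta = (\<lambda>q a. {min (q+1) (n-1)}), nfinal = {n-1}\<rparr>"

lemma N1_steps: "q < n \<Longrightarrow> nfa_steps (N1 n) {q} w = {min (q + length w) (n-1)}"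
proof (induction w arbitrary: q)
  case Nil then show ?case by simp
next
  case (Cons a w)
  have "nfa_steps (N1 n) {q} (a # w) = nfa_steps (N1 n) {min (q+1) (n-1)} w"
    by (simp add: N1_def)
  also have "\<dots> = {min (min (q+1) (n-1) + length w) (n-1)}" using Cons by simp
  finally show ?case by auto
qed

lemma N1_lang: "1 \<le> n \<Longrightarrow> nfa_lang {0} (N1 n) = {w \<in> lists {0}. n - 1 \<le> length w}"
  unfolding nfa_lang_def using N1_steps[of 0 n] by (auto simp: N1_def)

lemma rep0: "replicate k (0::nat) \<in> lists {0}" by (induction k) auto
lemma lists0: "w \<in> lists {0::nat} \<Longrightarrow> w = replicate (length w) 0" by (induction w) auto

lemma N1_dist: assumes "1 \<le> n" "i < n" "j < n" "i \<noteq> j" shows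
  "\<exists>z\<in>lists {0}. (nfa_steps (N1 n) {i} z \<inter> nfinal (N1 n) \<noteq> {}) \<noteq>
          (nfa_steps (N1 n) {j} z \<inter> nfinal (N1 n) \<noteq> {})"
  proof -
    note ij = assms(2-4)
    define k where "k = max i j"
    have si: "nfa_steps (N1 n) {i} (replicate (n-1-k) 0) = {min (i + (n-1-k)) (n-1)}"
      using N1_steps[of i n] ij(1) by simp
    have sj: "nfa_steps (N1 n) {j} (replicate (n-1-k) 0) = {min (j + (n-1-k)) (n-1)}"
      using N1_steps[of j n] ij(2) by simp
    have k: "i \<le> k" "j \<le> k" "k < n" "i = k \<or> j = k" using ij by (auto simp: k_def)
    have "(min (i + (n-1-k)) (n-1) = n-1) \<noteq> (min (j + (n-1-k)) (n-1) = n-1)"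
      using k ij(3) by (auto simp: min_def)
    have fin: "nfinal (N1 n) = {n-1}" by (simp add: N1_def)
    show ?thesis
    proof (rule bexI[of _ "replicate (n-1-k) 0"])
      show "replicate (n-1-k) 0 \<in> lists {0::nat}" by (rule rep0)
      show "(nfa_steps (N1 n) {i} (replicate (n-1-k) 0) \<inter> nfinal (N1 n) \<noteq> {}) \<noteq>
          (nfa_steps (N1 n) {j} (replicate (n-1-k) 0) \<inter> nfinal (N1 n) \<noteq> {})"
        unfolding si sj fin using \<open>(min (i + (n-1-k)) (n-1) = n-1) \<noteq> (min (j + (n-1-k)) (n-1) = n-1)\<close> by (simp, metis)
    qed
  qed

lemma N1_conc: assumes "1 \<le> n" shows "nfa_lang {0} (N1 n) = conc {replicate (n-1) 0} (lists {0})"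
  proof (rule set_eqI)
    fix w
    show "w \<in> nfa_lang {0} (N1 n) \<longleftrightarrow> w \<in> conc {replicate (n-1) 0} (lists {0})"
    proof
      assume "w \<in> nfa_lang {0} (N1 n)"
      then have w: "w \<in> lists {0}" "n - 1 \<le> length w" using N1_lang assms by auto
      have "w = replicate (length w) 0" by (rule lists0[OF w(1)])
      also have "\<dots> = replicate (n-1) 0 @ replicate (length w - (n-1)) 0"
        using w(2) by (simp add: replicate_add[symmetric])
      finally show "w \<in> conc {replicate (n-1) 0} (lists {0})" unfolding conc_def by auto
    next
      assume "w \<in> conc {replicate (n-1) 0} (lists {0})"
      then obtain v where v: "w = replicate (n-1) 0 @ v" "v \<in> lists {0}" unfolding conc_def by auto
      then show "w \<in> nfa_lang {0} (N1 n)" using assms rep0[of "n-1"] by (simp add: N1_lang)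
    qed
  qed

lemma N1_xy: "1 \<le> n \<Longrightarrow> i < n \<Longrightarrow> j < n \<Longrightarrow>
   replicate i 0 @ replicate (n - 1 - j) 0 \<in> nfa_lang {0} (N1 n) \<longleftrightarrow> j \<le> i"
  using rep0[of "i + (n - 1 - j)"] by (auto simp: N1_lang replicate_add[symmetric])

lemma case_eq:
  fixes n :: nat
  assumes "1 \<le> n"
  shows "\<exists>(Al :: nat set) (N :: (nat, nat) nfa) (D :: (nat, nat) dfa).
           finite Al \<and> Al \<noteq> {} \<and>
           nfa_minimal Al N \<and> card (nstates N) = n \<and>
           star_free Al (nfa_lang Al N) \<and>
           dfa_minimal Al D \<and> dfa_lang Al D = nfa_lang Al N \<and>
           card (dstates D) = n"
proof (rule framework[where N = "N1 n" and Al = "{0}" and R = "(\<lambda>i. {i}) ` {..<n}"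
      and x = "\<lambda>i. replicate i 0" and y = "\<lambda>i. replicate (n - 1 - i) 0"])
  show "finite {0::nat}" "{0::nat} \<noteq> {}" by auto
  show "nfa_wf {0} (N1 n)" using assms by (auto simp: nfa_wf_def N1_def)
  show "card (nstates (N1 n)) = n" by (simp add: N1_def)
  show "replicate i (0::nat) \<in> lists {0} \<and> replicate (n - 1 - i) (0::nat) \<in> lists {0} \<and>
      replicate i 0 @ replicate (n - 1 - i) 0 \<in> nfa_lang {0} (N1 n)" if "i < n" for i
    using that assms N1_xy[of n i i] rep0[of i] rep0[of "n - 1 - i"] by simp
  show "replicate i 0 @ replicate (n - 1 - j) 0 \<notin> nfa_lang {0} (N1 n) \<or>
         replicate j 0 @ replicate (n - 1 - i) 0 \<notin> nfa_lang {0} (N1 n)"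
    if "i < n" "j < n" "i \<noteq> j" for i j
    using that assms N1_xy[of n i j] N1_xy[of n j i] by auto
  show "(\<lambda>i. {i}) ` {..<n} \<subseteq> Pow (nstates (N1 n))" by (auto simp: N1_def)
  show "{ninit (N1 n)} \<in> (\<lambda>i. {i}) ` {..<n}" using assms by (auto simp: N1_def)
  show "(\<Union>q\<in>T. ndelta (N1 n) q a) \<in> (\<lambda>i. {i}) ` {..<n}" if "T \<in> (\<lambda>i. {i}) ` {..<n}" for T a
    using that assms by (auto simp: N1_def)
  show "\<exists>w\<in>lists {0}. nfa_steps (N1 n) {ninit (N1 n)} w = T" if hT: "T \<in> (\<lambda>i. {i}) ` {..<n}" for T
  proof -
    obtain i where i: "i < n" "T = {i}" using hT by auto
    have "nfa_steps (N1 n) {0} (replicate i 0) = {i}" using N1_steps[of 0 n] i assms by simp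
    moreover have "ninit (N1 n) = 0" by (simp add: N1_def)
    ultimately show ?thesis using i rep0[of i] by auto
  qed
  show "\<exists>z\<in>lists {0}. (nfa_steps (N1 n) T1 z \<inter> nfinal (N1 n) \<noteq> {}) \<noteq>
          (nfa_steps (N1 n) T2 z \<inter> nfinal (N1 n) \<noteq> {})"
    if hT: "T1 \<in> (\<lambda>i. {i}) ` {..<n}" "T2 \<in> (\<lambda>i. {i}) ` {..<n}" "T1 \<noteq> T2" for T1 T2
  proof -
    obtain i j where ij: "i < n" "j < n" "T1 = {i}" "T2 = {j}" "i \<noteq> j" using hT by auto
    show ?thesis using N1_dist[OF assms ij(1,2,5)] ij(3,4) by simp
  qed
  have X: "star_free {0} (conc {replicate (n-1) 0} (lists {0::nat}))"
    by (rule sf_conc[OF sf_word[OF _ _ rep0] sf_univ]) auto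
  show "star_free {0} (nfa_lang {0} (N1 n))" using X N1_conc[OF assms] by simp
  show "card ((\<lambda>i. {i}) ` {..<n}) = n" by (simp add: card_image)
qed


definition cl :: "nat \<Rightarrow> nat set \<Rightarrow> nat" where "cl n S = n + set_encode S"

definition N2 :: "nat \<Rightarrow> (nat,nat) nfa" where
  "N2 n = \<lparr>nstates = {0..<n}, ninit = 0,
     ndelta = (\<lambda>q a. if a + 1 < n \<and> q = a then {a+1} else if n \<le> a \<and> q = 0 then set_decode (a - n) else {}),
     nfinal = {n-1}\<rparr>"

definition Al2 :: "nat \<Rightarrow> nat set set \<Rightarrow> nat set" where
  "Al2 n F = {0..<n} \<union> cl n ` F"

lemma N2_delta_low: "a < n \<Longrightarrow> ndelta (N2 n) q a = (if a + 1 < n \<and> q = a then {a+1} else {})"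
  by (simp add: N2_def)

lemma N2_delta_cl: "finite S \<Longrightarrow> ndelta (N2 n) q (cl n S) = (if q = 0 then S else {})"
  by (simp add: N2_def cl_def)

lemma N2_chain: "i < n \<Longrightarrow> nfa_steps (N2 n) {0} [0..<i] = {i}"
proof (induction i)
  case 0 then show ?case by simp
next
  case (Suc i)
  have "nfa_steps (N2 n) {0} [0..<Suc i] = nfa_steps (N2 n) {i} [i]"
    using Suc by (simp add: steps_append)
  also have "\<dots> = {Suc i}" using Suc.prems by (simp add: N2_delta_low)
  finally show ?case .
qed

lemma Nil_eq_upt[simp]: "([] = [i..<j]) = (j \<le> i)"
proof (cases "j \<le> i")
  case True then show ?thesis by simp
next
  case False
  then have "[i..<j] = i # [Suc i..<j]" by (simp add: upt_conv_Cons)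
  then show ?thesis using False by simp
qed

lemma N2_tail_all: "i < n \<Longrightarrow> \<forall>q<n. (nfa_steps (N2 n) {q} [i..<n-1] \<inter> {n-1} \<noteq> {}) \<longleftrightarrow> q = i"
proof -
  assume "i < n" then have "i \<le> n - 1" by simp
  then show ?thesis
  proof (induction i rule: inc_induct)
    case base then show ?case by auto
  next
    case (step i)
    show ?case
    proof (intro allI impI)
      fix q assume q: "q < n"
      have si: "Suc i < n" using step.hyps by arith
      have "[i..<n-1] = i # [Suc i..<n-1]" using step by (simp add: upt_conv_Cons)
      then have "nfa_steps (N2 n) {q} [i..<n-1] = nfa_steps (N2 n) (ndelta (N2 n) q i) [Suc i..<n-1]"
        by simp
      also have "\<dots> = (if q = i then nfa_steps (N2 n) {Suc i} [Suc i..<n-1] else {})"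
        using step si by (simp add: N2_delta_low)
      finally show "(nfa_steps (N2 n) {q} [i..<n-1] \<inter> {n-1} \<noteq> {}) \<longleftrightarrow> q = i"
        using step.IH si by auto
    qed
  qed
qed

lemma N2_tail: "i < n \<Longrightarrow> q < n \<Longrightarrow> (nfa_steps (N2 n) {q} [i..<n-1] \<inter> {n-1} \<noteq> {}) \<longleftrightarrow> q = i"
  using N2_tail_all by blast

lemma N2_acc_pos: "1 \<le> q \<Longrightarrow> q < n \<Longrightarrow> (nfa_steps (N2 n) {q} w \<inter> {n-1} \<noteq> {}) \<longleftrightarrow> w = [q..<n-1]"
proof (induction w arbitrary: q)
  case Nil then show ?case by auto
next
  case (Cons a w)
  have d: "ndelta (N2 n) q a = (if a + 1 < n \<and> q = a then {a+1} else {})"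
    using Cons.prems by (simp add: N2_def)
  show ?case
  proof (cases "a + 1 < n \<and> q = a")
    case True
    then have "q < n - 1" by arith
    then have "[q..<n-1] = q # [Suc q..<n-1]" by (simp add: upt_conv_Cons)
    then show ?thesis using True d Cons.IH[of "a+1"] by auto
  next
    case False
    have "a # w \<noteq> [q..<n-1]"
    proof
      assume h: "a # w = [q..<n-1]"
      then have "q < n - 1" by (metis list.distinct(1) upt_eq_Nil_conv not_less)
      then have "[q..<n-1] = q # [Suc q..<n-1]" by (simp add: upt_conv_Cons)
      then show False using h False \<open>q < n - 1\<close> by auto
    qed
    then show ?thesis using False d by auto
  qed
qed

lemma conc_I: "u \<in> A \<Longrightarrow> v \<in> B \<Longrightarrow> u @ v \<in> conc A B"
  unfolding conc_def by blast

lemma conc_Nil: "[] \<in> conc (lists C) V \<longleftrightarrow> [] \<in> V"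
  by (auto simp: conc_def)

lemma conc_Cons: "a # w \<in> conc (lists C) V \<longleftrightarrow> a # w \<in> V \<or> (a \<in> C \<and> w \<in> conc (lists C) V)"
proof
  assume "a # w \<in> conc (lists C) V"
  then obtain u v where uv: "a # w = u @ v" "u \<in> lists C" "v \<in> V" by (auto simp: conc_def)
  show "a # w \<in> V \<or> (a \<in> C \<and> w \<in> conc (lists C) V)"
  proof (cases u)
    case Nil then show ?thesis using uv by simp
  next
    case (Cons b u')
    then show ?thesis using uv by (auto simp: conc_def)
  qed
next
  assume "a # w \<in> V \<or> (a \<in> C \<and> w \<in> conc (lists C) V)"
  then show "a # w \<in> conc (lists C) V"
  proof
    assume "a # w \<in> V" then show ?thesis using conc_I[of "[]" "lists C" "a # w" V] by simp
  next
    assume h: "a \<in> C \<and> w \<in> conc (lists C) V"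
    then obtain u v where uv: "w = u @ v" "u \<in> lists C" "v \<in> V" by (auto simp: conc_def)
    then show ?thesis using h conc_I[of "a # u" "lists C" v V] by simp
  qed
qed

lemma cl_inj: "finite S \<Longrightarrow> finite S' \<Longrightarrow> cl n S = cl n S' \<longleftrightarrow> S = S'"
  by (simp add: cl_def set_encode_eq)

definition C0 :: "nat \<Rightarrow> nat set set \<Rightarrow> nat set" where
  "C0 n F = cl n ` {S\<in>F. 0 \<in> S}"

definition V2 :: "nat \<Rightarrow> nat set set \<Rightarrow> nat list set" where
  "V2 n F = insert [0..<n-1] ((\<lambda>(S,i). cl n S # [i..<n-1]) ` (SIGMA S:F. S - {0}))"

lemma N2_desc:
  assumes F: "F \<subseteq> Pow {0..<n}" and n: "1 \<le> n"
  shows "w \<in> lists (Al2 n F) \<Longrightarrow>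
    (nfa_steps (N2 n) {0} w \<inter> {n-1} \<noteq> {}) \<longleftrightarrow> w \<in> conc (lists (C0 n F)) (V2 n F)"
proof (induction w)
  case Nil
  have "[] \<in> V2 n F \<longleftrightarrow> n - 1 = 0" by (auto simp: V2_def)
  then show ?case by (auto simp: conc_Nil)
next
  case (Cons a w)
  have finF: "\<And>S. S \<in> F \<Longrightarrow> finite S" using F by (auto intro: finite_subset)
  have cln: "cl n S \<ge> n" for S by (simp add: cl_def)
  have IH: "(nfa_steps (N2 n) {0} w \<inter> {n-1} \<noteq> {}) \<longleftrightarrow> w \<in> conc (lists (C0 n F)) (V2 n F)"
    using Cons by simp
  have a: "a \<in> Al2 n F" using Cons.prems by simp
  show ?case
  proof (cases "a < n")
    case True
    have notC0: "a \<notin> C0 n F" using True cln by (auto simp: C0_def) (metis not_le)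
    show ?thesis
    proof (cases "a = 0 \<and> 1 < n")
      case True
      have t0: "[0..<n-1] = 0 # [1..<n-1]" using True by (simp add: upt_conv_Cons)
      have "nfa_steps (N2 n) {0} (a # w) = nfa_steps (N2 n) {1} w"
        using True by (simp add: N2_delta_low)
      then have "(nfa_steps (N2 n) {0} (a # w) \<inter> {n-1} \<noteq> {}) \<longleftrightarrow> w = [1..<n-1]"
        using N2_acc_pos[of 1 n w] True by simp
      also have "\<dots> \<longleftrightarrow> a # w \<in> V2 n F" using True t0 cln by (auto simp: V2_def) (metis not_le zero_less_one less_le_trans le0)
      finally show ?thesis using notC0 by (simp add: conc_Cons)
    next
      case False
      have "ndelta (N2 n) 0 a = {}"
        using False \<open>a < n\<close> by (auto simp: N2_delta_low)
      then have "nfa_steps (N2 n) {0} (a # w) = {}" by simp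
      moreover have "a # w \<notin> V2 n F"
      proof
        assume "a # w \<in> V2 n F"
        then consider "a # w = [0..<n-1]" | S where "a = cl n S" by (auto simp: V2_def)
        then show False
        proof cases
          case 1
          then have "0 < n - 1" by (metis list.distinct(1) upt_eq_Nil_conv not_less)
          then have "[0..<n-1] = 0 # [1..<n-1]" by (simp add: upt_conv_Cons)
          then show False using 1 False \<open>0 < n - 1\<close> by auto
        next
          case 2 then show False using cln[of S] \<open>a < n\<close> by simp
        qed
      qed
      ultimately show ?thesis using notC0 by (simp add: conc_Cons)
    qed
  next
    case False
    then obtain S where S: "S \<in> F" "a = cl n S" using a by (auto simp: Al2_def)
    have fS: "finite S" using finF S by simp
    have Ssub: "S \<subseteq> {0..<n}" using F S by auto
    have e1: "nfa_steps (N2 n) {0} (a # w) = nfa_steps (N2 n) S w"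
      using S fS by (simp add: N2_delta_cl)
    have e2: "nfa_steps (N2 n) S w = (\<Union>p\<in>S. nfa_steps (N2 n) {p} w)" by (rule steps_union)
    have A2: "(nfa_steps (N2 n) {p} w \<inter> {n-1} \<noteq> {}) \<longleftrightarrow>
        (if p = 0 then w \<in> conc (lists (C0 n F)) (V2 n F) else w = [p..<n-1])" if p: "p \<in> S" for p
    proof (cases "p = 0")
      case True then show ?thesis using IH by simp
    next
      case False
      have "1 \<le> p" "p < n" using False p Ssub by auto
      then show ?thesis using N2_acc_pos[of p n w] False by simp
    qed
    have "(nfa_steps (N2 n) {0} (a # w) \<inter> {n-1} \<noteq> {}) \<longleftrightarrow>
        (\<exists>p\<in>S. nfa_steps (N2 n) {p} w \<inter> {n-1} \<noteq> {})"
      unfolding e1 e2 by auto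
    also have "\<dots> \<longleftrightarrow> (0 \<in> S \<and> w \<in> conc (lists (C0 n F)) (V2 n F)) \<or> (\<exists>p\<in>S - {0}. w = [p..<n-1])"
      using A2 by (auto split: if_splits)
    also have "\<dots> \<longleftrightarrow> a # w \<in> conc (lists (C0 n F)) (V2 n F)"
    proof -
      have c0: "a \<in> C0 n F \<longleftrightarrow> 0 \<in> S"
        using S finF cl_inj by (auto simp: C0_def)
      have v: "a # w \<in> V2 n F \<longleftrightarrow> (\<exists>p\<in>S - {0}. w = [p..<n-1])"
      proof
        assume hV: "a # w \<in> V2 n F"
        have "a # w = [0..<n-1] \<or> (\<exists>S' i. S' \<in> F \<and> i \<in> S' - {0} \<and> a = cl n S' \<and> w = [i..<n-1])"
          using hV unfolding V2_def by force
        then consider "a # w = [0..<n-1]" | S' i where "S' \<in> F" "i \<in> S' - {0}" "a = cl n S'" "w = [i..<n-1]"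
          by blast
        then show "\<exists>p\<in>S - {0}. w = [p..<n-1]"
        proof cases
          case 1
          then have "0 < n - 1" by (metis list.distinct(1) upt_eq_Nil_conv not_less)
          then have "[0..<n-1] = 0 # [1..<n-1]" by (simp add: upt_conv_Cons)
          then show ?thesis using 1 S cln[of S] n by auto
        next
          case 2
          then have "S' = S" using S cl_inj finF by metis
          then show ?thesis using 2 by auto
        qed
      next
        assume "\<exists>p\<in>S - {0}. w = [p..<n-1]"
        then show "a # w \<in> V2 n F" using S by (auto simp: V2_def)
      qed
      show ?thesis using c0 v by (auto simp: conc_Cons)
    qed
    finally show ?thesis .
  qed
qed


lemma N2_xy:
  assumes "i < n" "j < n"
  shows "(nfa_steps (N2 n) {0} ([0..<i] @ [j..<n-1]) \<inter> {n-1} \<noteq> {}) \<longleftrightarrow> i = j"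
proof -
  have "(nfa_steps (N2 n) {0} ([0..<i] @ [j..<n-1]) \<inter> {n-1} \<noteq> {}) \<longleftrightarrow>
        (\<exists>q\<in>{i}. nfa_steps (N2 n) {q} [j..<n-1] \<inter> {n-1} \<noteq> {})"
    unfolding acc_append N2_chain[OF assms(1)] by (rule refl)
  also have "\<dots> \<longleftrightarrow> i = j" using N2_tail[OF assms(2) assms(1)] by auto
  finally show ?thesis .
qed

lemma N2_accT:
  assumes "T \<subseteq> {0..<n}" "i < n"
  shows "(nfa_steps (N2 n) T [i..<n-1] \<inter> {n-1} \<noteq> {}) \<longleftrightarrow> i \<in> T"
proof -
  have "nfa_steps (N2 n) T [i..<n-1] = (\<Union>q\<in>T. nfa_steps (N2 n) {q} [i..<n-1])" by (rule steps_union)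
  moreover have "\<And>q. q \<in> T \<Longrightarrow> (nfa_steps (N2 n) {q} [i..<n-1] \<inter> {n-1} \<noteq> {}) \<longleftrightarrow> q = i"
    using N2_tail[OF assms(2)] assms(1) by auto
  ultimately show ?thesis by auto
qed

lemma N2_ninit: "ninit (N2 n) = 0" and N2_nfinal: "nfinal (N2 n) = {n-1}"
  and N2_nstates: "nstates (N2 n) = {0..<n}"
  by (simp_all add: N2_def)

lemma N2_lang_desc:
  assumes F: "F \<subseteq> Pow {0..<n}" and n: "1 \<le> n"
  shows "nfa_lang (Al2 n F) (N2 n) = conc (lists (C0 n F)) (V2 n F)"
proof -
  have C0sub: "C0 n F \<subseteq> Al2 n F" by (auto simp: C0_def Al2_def)
  have Vsub: "V2 n F \<subseteq> lists (Al2 n F)"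
  proof
    fix v assume "v \<in> V2 n F"
    then have "v = [0..<n-1] \<or> (\<exists>S i. S \<in> F \<and> i \<in> S - {0} \<and> v = cl n S # [i..<n-1])"
      unfolding V2_def by force
    then show "v \<in> lists (Al2 n F)" by (auto simp: Al2_def)
  qed
  have sub: "conc (lists (C0 n F)) (V2 n F) \<subseteq> lists (Al2 n F)"
  proof
    fix w assume "w \<in> conc (lists (C0 n F)) (V2 n F)"
    then obtain u v where "w = u @ v" "u \<in> lists (C0 n F)" "v \<in> V2 n F" unfolding conc_def by blast
    then show "w \<in> lists (Al2 n F)" using C0sub Vsub by auto
  qed
  show ?thesis
  proof (rule set_eqI)
    fix w
    show "w \<in> nfa_lang (Al2 n F) (N2 n) \<longleftrightarrow> w \<in> conc (lists (C0 n F)) (V2 n F)"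
    proof (cases "w \<in> lists (Al2 n F)")
      case True
      then show ?thesis using N2_desc[OF F n True] unfolding nfa_lang_def N2_ninit N2_nfinal by simp
    next
      case False
      then show ?thesis using sub unfolding nfa_lang_def by auto
    qed
  qed
qed

lemma V2_finite: "F \<subseteq> Pow {0..<n} \<Longrightarrow> finite (V2 n F)"
proof -
  assume F: "F \<subseteq> Pow {0..<n}"
  have "finite F" using F by (meson finite_Pow_iff finite_atLeastLessThan finite_subset)
  moreover have "\<And>S. S \<in> F \<Longrightarrow> finite (S - {0})" using F by (auto intro: finite_subset)
  ultimately have "finite (SIGMA S:F. S - {0})" by (rule finite_SigmaI)
  then show ?thesis unfolding V2_def by simp
qed

lemma case_main:
  fixes n :: nat and F :: "nat set set"
  assumes n: "1 \<le> n" and F: "F \<subseteq> Pow {0..<n}" and F2: "\<And>S. S \<in> F \<Longrightarrow> 2 \<le> card S"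
  and alpha: "\<alpha> = n + 1 + card F"
  shows "\<exists>(Al :: nat set) (N :: (nat, nat) nfa) (D :: (nat, nat) dfa).
           finite Al \<and> Al \<noteq> {} \<and>
           nfa_minimal Al N \<and> card (nstates N) = n \<and>
           star_free Al (nfa_lang Al N) \<and>
           dfa_minimal Al D \<and> dfa_lang Al D = nfa_lang Al N \<and>
           card (dstates D) = \<alpha>"
proof -
  define R where "R = insert {} ((\<lambda>i. {i}) ` {..<n} \<union> F)"
  have finF: "finite F" using F by (meson finite_Pow_iff finite_atLeastLessThan finite_subset)
  have finS: "\<And>S. S \<in> F \<Longrightarrow> finite S" using F by (auto intro: finite_subset)
  have Ssub: "\<And>S. S \<in> F \<Longrightarrow> S \<subseteq> {0..<n}" using F by auto
  have Rsub: "\<And>T. T \<in> R \<Longrightarrow> T \<subseteq> {0..<n}" unfolding R_def using Ssub by auto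
  have low: "\<And>i. i < n \<Longrightarrow> i \<in> Al2 n F" by (simp add: Al2_def)
  have upt_lists: "[i..<j] \<in> lists (Al2 n F)" if "j \<le> n" for i j using that low by auto
  have lang: "w \<in> nfa_lang (Al2 n F) (N2 n) \<longleftrightarrow>
      w \<in> lists (Al2 n F) \<and> nfa_steps (N2 n) {0} w \<inter> {n-1} \<noteq> {}" for w
    unfolding nfa_lang_def N2_ninit N2_nfinal by simp
  show ?thesis
  proof (rule framework[where N = "N2 n" and Al = "Al2 n F" and R = R
        and x = "\<lambda>i. [0..<i]" and y = "\<lambda>i. [i..<n-1]"])
    show "finite (Al2 n F)" using finF by (simp add: Al2_def)
    show "Al2 n F \<noteq> {}" using low n by auto
    show "nfa_wf (Al2 n F) (N2 n)"
      unfolding nfa_wf_def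
    proof (intro conjI ballI)
      show "finite (nstates (N2 n))" "ninit (N2 n) \<in> nstates (N2 n)" "nfinal (N2 n) \<subseteq> nstates (N2 n)"
        using n by (auto simp: N2_ninit N2_nfinal N2_nstates)
      fix q a assume q: "q \<in> nstates (N2 n)" and a: "a \<in> Al2 n F"
      show "ndelta (N2 n) q a \<subseteq> nstates (N2 n)"
      proof (cases "a < n")
        case True then show ?thesis by (auto simp: N2_delta_low N2_nstates)
      next
        case False
        then obtain S where S: "S \<in> F" "a = cl n S" using a by (auto simp: Al2_def)
        then show ?thesis using N2_delta_cl[OF finS[OF S(1)], of n q] Ssub[OF S(1)] by (auto simp: N2_nstates)
      qed
    qed
    show "card (nstates (N2 n)) = n" by (simp add: N2_nstates)
    show "[0..<i] \<in> lists (Al2 n F) \<and> [i..<n-1] \<in> lists (Al2 n F) \<and>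
        [0..<i] @ [i..<n-1] \<in> nfa_lang (Al2 n F) (N2 n)" if "i < n" for i
    proof -
      have "[0..<i] \<in> lists (Al2 n F)" by (rule upt_lists) (use that in simp)
      moreover have "[i..<n-1] \<in> lists (Al2 n F)" by (rule upt_lists) simp
      ultimately show ?thesis using N2_xy[OF that that] unfolding lang by simp
    qed
    show "[0..<i] @ [j..<n-1] \<notin> nfa_lang (Al2 n F) (N2 n) \<or> [0..<j] @ [i..<n-1] \<notin> nfa_lang (Al2 n F) (N2 n)"
      if "i < n" "j < n" "i \<noteq> j" for i j
      using N2_xy[OF that(1,2)] that(3) unfolding lang by simp
    show "R \<subseteq> Pow (nstates (N2 n))" using Rsub by (auto simp: N2_nstates)
    show "{ninit (N2 n)} \<in> R" using n by (auto simp: R_def N2_ninit)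
    show "(\<Union>q\<in>T. ndelta (N2 n) q a) \<in> R" if T: "T \<in> R" and a: "a \<in> Al2 n F" for T a
    proof (cases "a < n")
      case True
      have "(\<Union>q\<in>T. ndelta (N2 n) q a) = (if a \<in> T \<and> a + 1 < n then {a+1} else {})"
        using True by (auto simp: N2_delta_low)
      then show ?thesis by (auto simp: R_def)
    next
      case False
      then obtain S where S: "S \<in> F" "a = cl n S" using a by (auto simp: Al2_def)
      have "(\<Union>q\<in>T. ndelta (N2 n) q a) = (if 0 \<in> T then S else {})"
        using S N2_delta_cl[OF finS[OF S(1)], of n] by auto
      then show ?thesis using S by (auto simp: R_def)
    qed
    show "\<exists>w\<in>lists (Al2 n F). nfa_steps (N2 n) {ninit (N2 n)} w = T" if T: "T \<in> R" for T
    proof -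
      consider "T = {}" | i where "i < n" "T = {i}" | "T \<in> F" using T unfolding R_def by blast
      then show ?thesis
      proof cases
        case 1
        have "ndelta (N2 n) 0 (n-1) = {}" using n by (simp add: N2_delta_low)
        then have "nfa_steps (N2 n) {0} [n-1] = {}" by simp
        moreover have "[n-1] \<in> lists (Al2 n F)" using n low by simp
        ultimately show ?thesis using 1 unfolding N2_ninit by blast
      next
        case 2
        have "[0..<i] \<in> lists (Al2 n F)" by (rule upt_lists) (use 2 in simp)
        then show ?thesis using N2_chain[of i n] 2 unfolding N2_ninit by (intro bexI[of _ "[0..<i]"]) auto
      next
        case 3
        have "nfa_steps (N2 n) {0} [cl n T] = T" using N2_delta_cl[OF finS[OF 3], of n] by simp
        moreover have "[cl n T] \<in> lists (Al2 n F)" using 3 by (simp add: Al2_def)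
        ultimately show ?thesis unfolding N2_ninit by blast
      qed
    qed
    show "\<exists>z\<in>lists (Al2 n F). (nfa_steps (N2 n) T1 z \<inter> nfinal (N2 n) \<noteq> {}) \<noteq>
        (nfa_steps (N2 n) T2 z \<inter> nfinal (N2 n) \<noteq> {})"
      if T: "T1 \<in> R" "T2 \<in> R" "T1 \<noteq> T2" for T1 T2
    proof -
      have s1: "T1 \<subseteq> {0..<n}" and s2: "T2 \<subseteq> {0..<n}" using Rsub T by auto
      have "\<exists>x. (x \<in> T1) \<noteq> (x \<in> T2)"
      proof (rule ccontr)
        assume "\<not> (\<exists>x. (x \<in> T1) \<noteq> (x \<in> T2))"
        then have "T1 = T2" by auto
        then show False using T(3) by simp
      qed
      then obtain i where i2: "(i \<in> T1) \<noteq> (i \<in> T2)" by blast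
      then have "i \<in> T1 \<or> i \<in> T2" by auto
      then have "i < n" using s1 s2 by auto
      note i = this i2
      have il: "[i..<n-1] \<in> lists (Al2 n F)" by (rule upt_lists) simp
      show ?thesis
        using N2_accT[OF s1 i(1)] N2_accT[OF s2 i(1)] i(2) il
        unfolding N2_nfinal by (intro bexI[of _ "[i..<n-1]"]) auto
    qed
    have a0: "0 \<in> Al2 n F" using n low by simp
    have C0sub: "C0 n F \<subseteq> Al2 n F" by (auto simp: C0_def Al2_def)
    have Vsub: "V2 n F \<subseteq> lists (Al2 n F)"
    proof
      fix v assume "v \<in> V2 n F"
      then have "v = [0..<n-1] \<or> (\<exists>S i. S \<in> F \<and> i \<in> S - {0} \<and> v = cl n S # [i..<n-1])"
        unfolding V2_def by force
      then show "v \<in> lists (Al2 n F)" by (auto simp: Al2_def)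
    qed
    have fA: "finite (Al2 n F)" using finF by (simp add: Al2_def)
    have X: "star_free (Al2 n F) (conc (lists (C0 n F)) (V2 n F))"
      by (rule sf_conc[OF sf_lists[OF fA a0 C0sub] sf_finite[OF V2_finite[OF F] fA a0 Vsub]])
    show "star_free (Al2 n F) (nfa_lang (Al2 n F) (N2 n))"
      using X N2_lang_desc[OF F n] by simp
    show "card R = \<alpha>"
    proof -
      have d1: "{} \<notin> (\<lambda>i. {i}) ` {..<n} \<union> F" using F2 by fastforce
      have d2: "(\<lambda>i. {i}) ` {..<n} \<inter> F = {}" using F2 by fastforce
      have "card R = Suc (card ((\<lambda>i. {i}) ` {..<n} \<union> F))"
        unfolding R_def using d1 finF by (simp add: card_insert_disjoint)
      also have "\<dots> = Suc (n + card F)" using d2 finF by (simp add: card_Un_disjoint card_image)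
      finally show ?thesis using alpha by simp
    qed
  qed
qed

lemma card_big: "card {S \<in> Pow {0..<n::nat}. 2 \<le> card S} = 2 ^ n - n - 1"
proof -
  define Big where "Big = {S \<in> Pow {0..<n::nat}. 2 \<le> card S}"
  define Small where "Small = insert {} ((\<lambda>i. {i}) ` {..<n})"
  have eq: "Pow {0..<n} = Small \<union> Big"
  proof (rule set_eqI)
    fix S
    show "S \<in> Pow {0..<n} \<longleftrightarrow> S \<in> Small \<union> Big"
    proof
      assume S: "S \<in> Pow {0..<n}"
      then have fS: "finite S" by (auto intro: finite_subset)
      show "S \<in> Small \<union> Big"
      proof (cases "2 \<le> card S")
        case True then show ?thesis using S by (simp add: Big_def)
      next
        case False
        then have "card S = 0 \<or> card S = Suc 0" by arith
        then show ?thesis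
        proof
          assume "card S = 0" then have "S = {}" using fS by simp
          then show ?thesis by (simp add: Small_def)
        next
          assume "card S = Suc 0" then obtain x where "S = {x}" using card_1_singleton_iff by metis
          then show ?thesis using S by (auto simp: Small_def)
        qed
      qed
    next
      assume "S \<in> Small \<union> Big" then show "S \<in> Pow {0..<n}" by (auto simp: Small_def Big_def)
    qed
  qed
  have disj: "Small \<inter> Big = {}" by (auto simp: Small_def Big_def)
  have fB: "finite Big" unfolding Big_def by simp
  have cS: "card Small = Suc n"
  proof -
    have "{} \<notin> (\<lambda>i. {i}) ` {..<n}" by auto
    then show ?thesis unfolding Small_def by (simp add: card_image)
  qed
  have fSm: "finite Small" by (simp add: Small_def)
  have "2 ^ n = card (Pow {0..<n::nat})" by (simp add: card_Pow)
  also have "\<dots> = card (Small \<union> Big)" by (simp only: eq)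
  also have "\<dots> = card Small + card Big" by (rule card_Un_disjoint[OF fSm fB disj])
  also have "\<dots> = Suc n + card Big" by (simp only: cS)
  finally show ?thesis unfolding Big_def by simp
qed

theorem mainTheorem2:
  fixes n \<alpha> :: nat
  assumes "1 \<le> n" and "n \<le> \<alpha>" and "\<alpha> \<le> 2 ^ n"
  shows "\<exists>(Al :: nat set) (N :: (nat, nat) nfa) (D :: (nat, nat) dfa).
           finite Al \<and> Al \<noteq> {} \<and>
           nfa_minimal Al N \<and> card (nstates N) = n \<and>
           star_free Al (nfa_lang Al N) \<and>
           dfa_minimal Al D \<and> dfa_lang Al D = nfa_lang Al N \<and>
           card (dstates D) = \<alpha>"
proof (cases "\<alpha> = n")
  case True
  then show ?thesis using case_eq[OF assms(1)] by simp
next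
  case False
  have "\<alpha> - n - 1 \<le> card {S \<in> Pow {0..<n::nat}. 2 \<le> card S}"
    unfolding card_big using assms by simp
  then obtain F where F: "F \<subseteq> {S \<in> Pow {0..<n::nat}. 2 \<le> card S}" "card F = \<alpha> - n - 1"
    by (rule obtain_subset_with_card_n)
  show ?thesis
  proof (rule case_main[OF assms(1)])
    show "F \<subseteq> Pow {0..<n}" using F by auto
    show "\<And>S. S \<in> F \<Longrightarrow> 2 \<le> card S" using F by auto
    show "\<alpha> = n + 1 + card F" using F(2) False assms by simp
  qed
qed

end
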